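(* Let $(X,d)$ be a complete separable metric space without isolated points and let $f\colon X\to X$ be a continuous map. Then the following assertions are equivalent: (1) there exists a dense, uniformly Li-Yorke scrambled set in $X$; (2) $f$ is densely uniformly Li-Yorke chaotic; (3) there exists a dense, $\sigma$-Cantor, uniformly Li-Yorke scrambled set in $X$; (4) for every $k\geq 2$, both $\mathrm{Prox}_k(f)$ and $D_k(f)$ are dense in $X^k$.
   Context: A subset $S\subset X$ with at least two points is uniformly Li-Yorke scrambled for $f$ if there exist two sequences $\{p_n\}$, $\{q_n\}$ in $\mathbb{N}$ such that for all $x,y\in S$ with $x\neq y$: $\lim_{n\to\infty} d(f^{p_n}(x),f^{p_n}(y))=0$ and $\lim_{n\to\infty} d(f^{q_n}(x),f^{q_n}(y))=\infty$. The map $f$ is densely uniformly Li-Yorke chaotic if there exists a dense, uncountable, uniformly Li-Yorke scrambled subset of $X$. A Cantor set is a set homeomorphic to the Cantor ternary set; a $\sigma$-Cantor set is a countable union of Cantor sets. For $k\geq 2$, $\mathrm{Prox}_k(f)=\{(x_1,\dots,x_k)\in X^k: \liminf_{n\to\infty}\max_{1\leq i<j\leq k} d(f^n(x_i),f^n(x_j))=0\}$ and $D_k(f)=\{(x_1,\dots,x_k)\in X^k: \limsup_{n\to\infty}\min_{1\leq i<j\leq k} d(f^n(x_i),f^n(x_j))=\infty\}$. *)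

theory Defs
  imports "HOL-Analysis.Analysis" "HOL-Library.Liminf_Limsup"
begin

definition cantor_ternary_set :: "real set" where
  "cantor_ternary_set =
     {x. \<exists>a::nat \<Rightarrow> bool. x = (\<Sum>n. (if a n then 2 else 0) / 3 ^ Suc n)}"

definition cantor_set :: "'a::topological_space set \<Rightarrow> bool" where
  "cantor_set C \<longleftrightarrow> C homeomorphic cantor_ternary_set"

definition sigma_cantor_set :: "'a::topological_space set \<Rightarrow> bool" where
  "sigma_cantor_set S \<longleftrightarrow> (\<exists>C::nat \<Rightarrow> 'a set. (\<forall>n. cantor_set (C n)) \<and> S = (\<Union>n. C n))"

definition unif_LY_scrambled :: "('a::metric_space \<Rightarrow> 'a) \<Rightarrow> 'a set \<Rightarrow> bool" where
  "unif_LY_scrambled f S \<longleftrightarrow>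
     (\<exists>x\<in>S. \<exists>y\<in>S. x \<noteq> y) \<and>
     (\<exists>p q :: nat \<Rightarrow> nat.
        \<forall>x\<in>S. \<forall>y\<in>S. x \<noteq> y \<longrightarrow>
          ((\<lambda>n. dist ((f ^^ p n) x) ((f ^^ p n) y)) \<longlonglongrightarrow> 0) \<and>
          filterlim (\<lambda>n. dist ((f ^^ q n) x) ((f ^^ q n) y)) at_top sequentially)"

definition densely_unif_LY_chaotic :: "('a::metric_space \<Rightarrow> 'a) \<Rightarrow> bool" where
  "densely_unif_LY_chaotic f \<longleftrightarrow>
     (\<exists>S. closure S = UNIV \<and> uncountable S \<and> unif_LY_scrambled f S)"

text \<open>Points of X^k are represented as extensional functions on {..<k}.\<close>
definition Prox :: "nat \<Rightarrow> ('a::metric_space \<Rightarrow> 'a) \<Rightarrow> (nat \<Rightarrow> 'a) set" where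
  "Prox k f = {x \<in> PiE {..<k} (\<lambda>_. UNIV).
     liminf (\<lambda>n. ereal (Max {dist ((f ^^ n) (x i)) ((f ^^ n) (x j)) | i j. i < j \<and> j < k})) = 0}"

definition Dk :: "nat \<Rightarrow> ('a::metric_space \<Rightarrow> 'a) \<Rightarrow> (nat \<Rightarrow> 'a) set" where
  "Dk k f = {x \<in> PiE {..<k} (\<lambda>_. UNIV).
     limsup (\<lambda>n. ereal (Min {dist ((f ^^ n) (x i)) ((f ^^ n) (x j)) | i j. i < j \<and> j < k})) = \<infinity>}"

definition dense_in_power :: "nat \<Rightarrow> (nat \<Rightarrow> 'a::topological_space) set \<Rightarrow> bool" where
  "dense_in_power k A \<longleftrightarrow>
     (product_topology (\<lambda>_. euclidean) {..<k}) closure_of A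
       = topspace (product_topology (\<lambda>_. euclidean) {..<k})"

end

theory Submission
  imports Defs
begin

lemma continuous_on_funpow:
  fixes f :: "'a::topological_space \<Rightarrow> 'a"
  assumes "continuous_on UNIV f" shows "continuous_on UNIV (f ^^ n)"
proof (induction n)
  case 0
  have "(f ^^ 0) = (\<lambda>x. x)" by auto
  then show ?case by (simp add: continuous_on_id)
next
  case (Suc n)
  have "continuous_on UNIV (f \<circ> (f ^^ n))"
    using continuous_on_compose[OF Suc continuous_on_subset[OF assms]] by simp
  then show ?case by simp
qed

lemma liminf_zeroI:
  fixes h :: "nat \<Rightarrow> real"
  assumes nn: "\<And>n. h n \<ge> 0" and freq: "\<And>e N. e > 0 \<Longrightarrow> \<exists>n\<ge>N. h n < e"
  shows "liminf (\<lambda>n. ereal (h n)) = 0"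
proof (rule antisym)
  show "0 \<le> liminf (\<lambda>n. ereal (h n))"
    by (rule Liminf_bounded) (auto simp: nn)
  show "liminf (\<lambda>n. ereal (h n)) \<le> 0"
  proof (rule ccontr)
    assume "\<not> ?thesis"
    then have "0 < liminf (\<lambda>n. ereal (h n))" by simp
    then obtain z :: ereal where z: "0 < z" "z < liminf (\<lambda>n. ereal (h n))"
      using dense by blast
    then have "z \<noteq> \<infinity>" by auto
    with z(1) obtain r where r: "z = ereal r" "r > 0"
      by (cases z) auto
    have "eventually (\<lambda>n. ereal (h n) > z) sequentially"
      using less_LiminfD[OF z(2)] .
    then obtain N where N: "\<And>n. n \<ge> N \<Longrightarrow> h n > r"
      using r by (auto simp: eventually_sequentially)
    from freq[OF r(2), of N] N show False by force
  qed
qed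

lemma limsup_inftyI:
  fixes h :: "nat \<Rightarrow> real"
  assumes freq: "\<And>B N. \<exists>n\<ge>N. h n > B"
  shows "limsup (\<lambda>n. ereal (h n)) = \<infinity>"
proof (rule ccontr)
  assume A: "limsup (\<lambda>n. ereal (h n)) \<noteq> \<infinity>"
  obtain B where B: "limsup (\<lambda>n. ereal (h n)) < ereal B"
  proof (cases "limsup (\<lambda>n. ereal (h n))")
    case (real r) then show ?thesis using that[of "r+1"] by auto
  next
    case PInf then show ?thesis using A by auto
  next
    case MInf then show ?thesis using that[of 0] by auto
  qed
  then have "eventually (\<lambda>n. ereal (h n) < ereal B) sequentially"
    by (rule Limsup_lessD)
  then obtain N where N: "\<And>n. n \<ge> N \<Longrightarrow> h n < B"
    by (auto simp: eventually_sequentially)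
  from freq[where B=B and N=N] N show False by force
qed

lemma liminf_zeroD:
  fixes h :: "nat \<Rightarrow> real"
  assumes "liminf (\<lambda>n. ereal (h n)) = 0" "e > 0"
  shows "\<exists>n. h n < e"
proof (rule ccontr)
  assume "\<not> ?thesis"
  then have "eventually (\<lambda>n. ereal e \<le> ereal (h n)) sequentially" by (auto simp: not_less)
  then have "ereal e \<le> liminf (\<lambda>n. ereal (h n))" by (rule Liminf_bounded)
  with assms show False by simp
qed

lemma limsup_inftyD:
  fixes h :: "nat \<Rightarrow> real"
  assumes "limsup (\<lambda>n. ereal (h n)) = \<infinity>"
  shows "\<exists>n. h n > B"
proof (rule ccontr)
  assume "\<not> ?thesis"
  then have "eventually (\<lambda>n. ereal (h n) \<le> ereal B) sequentially" by (auto simp: not_less)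
  then have "limsup (\<lambda>n. ereal (h n)) \<le> ereal B" by (rule Limsup_bounded)
  with assms show False by simp
qed

lemma uncountable_bool_fun: "uncountable (UNIV :: (nat \<Rightarrow> bool) set)"
proof
  assume "countable (UNIV :: (nat \<Rightarrow> bool) set)"
  then have "range (from_nat_into (UNIV :: (nat \<Rightarrow> bool) set)) = UNIV"
    by (intro range_from_nat_into) auto
  then obtain k where "from_nat_into UNIV k = (\<lambda>n. \<not> from_nat_into (UNIV :: (nat \<Rightarrow> bool) set) n n)"
    by (metis UNIV_I imageE)
  then show False by (metis)
qed

lemma choose_distinct:
  fixes k :: nat
  assumes "\<And>i. i < k \<Longrightarrow> infinite (W i)"
  shows "\<exists>y. inj_on y {..<k} \<and> (\<forall>i<k. y i \<in> W i)"
  using assms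
proof (induction k)
  case 0 then show ?case by auto
next
  case (Suc k)
  then obtain y where y: "inj_on y {..<k}" "\<forall>i<k. y i \<in> W i" by auto
  have "infinite (W k - y ` {..<k})"
    using Suc.prems[of k] by (simp add: Diff_infinite_finite)
  then obtain z where z: "z \<in> W k" "z \<notin> y ` {..<k}"
    by (metis Diff_iff finite.emptyI ex_in_conv)
  let ?y = "y(k := z)"
  have "inj_on ?y {..<Suc k}"
    using y(1) z(2) unfolding inj_on_def by (auto simp: less_Suc_eq)
  moreover have "\<forall>i<Suc k. ?y i \<in> W i" using y(2) z(1) by (auto simp: less_Suc_eq)
  ultimately show ?case by blast
qed

lemma dense_open_infinite:
  fixes S :: "'a::metric_space set"
  assumes S: "closure S = UNIV" and ni: "\<And>x::'a. x islimpt UNIV" and U: "open U" "x \<in> U"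
  shows "infinite (U \<inter> S)"
proof -
  have "x islimpt S"
    unfolding islimpt_def
  proof (intro allI impI)
    fix T assume T: "x \<in> T" "open T"
    then obtain y where y: "y \<in> T" "y \<noteq> x"
      using ni[of x] unfolding islimpt_def by blast
    have o: "open (T - {x})" using T(2) by (simp add: open_delete)
    have "(T - {x}) \<inter> closure S \<noteq> {}" using y S by auto
    then have "(T - {x}) \<inter> S \<noteq> {}" using open_Int_closure_eq_empty[OF o] by auto
    then show "\<exists>y\<in>S. y \<in> T \<and> y \<noteq> x" by auto
  qed
  obtain e where e: "e > 0" "ball x e \<subseteq> U" using U open_contains_ball by blast
  have "infinite (S \<inter> ball x e)" using \<open>x islimpt S\<close> e(1) islimpt_eq_infinite_ball by blast
  then show ?thesis using e(2) by (metis Int_commute Int_mono infinite_super subset_refl)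
qed

lemma abstract_freq_zero:
  fixes h :: "nat \<Rightarrow> real"
  assumes nn: "\<And>n. h n \<ge> 0"
    and zprop: "\<And>m m'. m \<le> m' \<Longrightarrow> h m = 0 \<Longrightarrow> h m' = 0"
    and ev: "\<And>e. e > 0 \<Longrightarrow> eventually (\<lambda>n. h (p n) < e) sequentially"
    and e: "e > 0"
  shows "\<exists>n\<ge>N. h n < e"
proof (cases "\<exists>m\<le>N. h m = 0")
  case True
  then obtain m where "m \<le> N" "h m = 0" by auto
  then have "h N = 0" using zprop by blast
  then show ?thesis using e by auto
next
  case False
  define \<mu> where "\<mu> = Min (h ` {..N})"
  have "\<mu> \<in> h ` {..N}" unfolding \<mu>_def by (intro Min_in) auto
  then have "\<mu> > 0" using False nn by (auto simp: order.strict_iff_order)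
  have lb: "\<And>m. m \<le> N \<Longrightarrow> \<mu> \<le> h m" unfolding \<mu>_def by (intro Min_le) auto
  obtain M where M: "\<And>n. n \<ge> M \<Longrightarrow> h (p n) < min e \<mu>"
    using ev[of "min e \<mu>"] \<open>\<mu> > 0\<close> e by (auto simp: eventually_sequentially)
  have "h (p M) < min e \<mu>" using M by auto
  then have "\<not> p M \<le> N" using lb[of "p M"] by auto
  then show ?thesis using \<open>h (p M) < min e \<mu>\<close> by (intro exI[of _ "p M"]) auto
qed

lemma abstract_freq_infty:
  fixes g :: "nat \<Rightarrow> real"
  assumes ev: "\<And>B. eventually (\<lambda>n. g (q n) > B) sequentially"
  shows "\<exists>n\<ge>N. g n > B"
proof -
  define \<mu> where "\<mu> = Max (g ` {..N})"
  have ub: "\<And>m. m \<le> N \<Longrightarrow> g m \<le> \<mu>" unfolding \<mu>_def by (intro Max_ge) auto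
  obtain M where M: "\<And>n. n \<ge> M \<Longrightarrow> g (q n) > max B \<mu>"
    using ev[of "max B \<mu>"] by (auto simp: eventually_sequentially)
  have "g (q M) > max B \<mu>" using M by auto
  then have "\<not> q M \<le> N" using ub[of "q M"] by auto
  then show ?thesis using \<open>g (q M) > max B \<mu>\<close> by (intro exI[of _ "q M"]) auto
qed

definition pairs :: "nat \<Rightarrow> (nat \<times> nat) set" where
  "pairs k = {(i,j). i < j \<and> j < k}"

lemma pairset_eq:
  "{g i j | i j. i < j \<and> j < (k::nat)} = (\<lambda>(i,j). g i j) ` pairs k"
  unfolding pairs_def by auto

lemma pairs_finite: "finite (pairs k)"
proof (rule finite_subset[of _ "{..<k} \<times> {..<k}"])
  show "pairs k \<subseteq> {..<k} \<times> {..<k}" unfolding pairs_def by auto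
qed auto

lemma pairset_fin: "finite {g i j | i j. i < j \<and> j < (k::nat)}"
  unfolding pairset_eq by (intro finite_imageI pairs_finite)

lemma pairs_mem: "k \<ge> 2 \<Longrightarrow> (0,1) \<in> pairs k"
  unfolding pairs_def by simp

lemma pairset_mem: "k \<ge> 2 \<Longrightarrow> g 0 1 \<in> {g i j | i j. i < j \<and> j < (k::nat)}"
proof -
  assume "k \<ge> 2"
  then have "(0::nat) < 1 \<and> (1::nat) < k" by simp
  then have "\<exists>i j. g 0 1 = g i j \<and> i < j \<and> j < k" by blast
  then show ?thesis by simp
qed

lemma pairset_all: "(\<forall>x\<in>{g i j | i j. i < j \<and> j < (k::nat)}. P x) \<longleftrightarrow> (\<forall>i j. i < j \<and> j < k \<longrightarrow> P (g i j))"
  by blast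

lemma pairset_ne: "k \<ge> 2 \<Longrightarrow> {g i j | i j. i < j \<and> j < (k::nat)} \<noteq> {}"
  by (drule pairset_mem[where g=g]) auto

lemma Max_pair_less_iff:
  fixes g :: "nat \<Rightarrow> nat \<Rightarrow> real"
  assumes "k \<ge> 2"
  shows "Max {g i j | i j. i < j \<and> j < k} < e \<longleftrightarrow> (\<forall>i j. i < j \<and> j < k \<longrightarrow> g i j < e)"
  unfolding Max_less_iff[OF pairset_fin pairset_ne[OF assms]] pairset_all ..

lemma Max_pair_le_iff:
  fixes g :: "nat \<Rightarrow> nat \<Rightarrow> real"
  assumes "k \<ge> 2"
  shows "Max {g i j | i j. i < j \<and> j < k} \<le> e \<longleftrightarrow> (\<forall>i j. i < j \<and> j < k \<longrightarrow> g i j \<le> e)"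
  unfolding Max_le_iff[OF pairset_fin pairset_ne[OF assms]] pairset_all ..

lemma Min_pair_gr_iff:
  fixes g :: "nat \<Rightarrow> nat \<Rightarrow> real"
  assumes "k \<ge> 2"
  shows "Min {g i j | i j. i < j \<and> j < k} > e \<longleftrightarrow> (\<forall>i j. i < j \<and> j < k \<longrightarrow> g i j > e)"
  unfolding Min_gr_iff[OF pairset_fin pairset_ne[OF assms]] pairset_all ..

lemma Max_pair_ge:
  fixes g :: "nat \<Rightarrow> nat \<Rightarrow> real"
  assumes "k \<ge> 2"
  shows "g 0 1 \<le> Max {g i j | i j. i < j \<and> j < k}"
  by (rule Max_ge[OF pairset_fin pairset_mem[OF assms]])

lemma dense_power_I:
  fixes A :: "(nat \<Rightarrow> 'a::metric_space) set"
  assumes sub: "A \<subseteq> PiE {..<k} (\<lambda>_. UNIV)"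
    and H: "\<And>U. (\<And>i. i < k \<Longrightarrow> open (U i)) \<Longrightarrow> (\<And>i. i < k \<Longrightarrow> U i \<noteq> {}) \<Longrightarrow> \<exists>y\<in>A. \<forall>i<k. y i \<in> U i"
  shows "dense_in_power k A"
  unfolding dense_in_power_def
proof (rule antisym)
  show "product_topology (\<lambda>_. euclidean) {..<k} closure_of A \<subseteq> topspace (product_topology (\<lambda>_. euclidean) {..<k})"
    by (rule closure_of_subset_topspace)
  show "topspace (product_topology (\<lambda>_. euclidean) {..<k}) \<subseteq> product_topology (\<lambda>_. euclidean) {..<k} closure_of A"
  proof
    fix x assume x: "x \<in> topspace (product_topology (\<lambda>_. euclidean::'a topology) {..<k})"
    show "x \<in> product_topology (\<lambda>_. euclidean) {..<k} closure_of A"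
      unfolding in_closure_of
    proof (intro conjI allI impI x)
      fix T assume T: "x \<in> T \<and> openin (product_topology (\<lambda>_. euclidean) {..<k}) T"
      have xT: "x \<in> T" and oT: "openin (product_topology (\<lambda>_. euclidean) {..<k}) T" using T by auto
      have "\<exists>U. finite {i \<in> {..<k}. U i \<noteq> topspace euclidean} \<and>
                 (\<forall>i \<in> {..<k}. openin euclidean (U i)) \<and> x \<in> Pi\<^sub>E {..<k} U \<and> Pi\<^sub>E {..<k} U \<subseteq> T"
        using oT xT unfolding openin_product_topology_alt by (elim ballE) auto
      then obtain U where U0: "finite {i \<in> {..<k}. U i \<noteq> (topspace euclidean::'a set)} \<and>
                 (\<forall>i \<in> {..<k}. openin euclidean (U i)) \<and> x \<in> Pi\<^sub>E {..<k} U \<and> Pi\<^sub>E {..<k} U \<subseteq> T"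
        by (elim exE)
      then have U: "\<forall>i\<in>{..<k}. openin euclidean (U i)" "x \<in> PiE {..<k} U" "PiE {..<k} U \<subseteq> T"
        by simp_all
      have "\<exists>y\<in>A. \<forall>i<k. y i \<in> U i"
      proof (rule H)
        show "open (U i)" if "i < k" for i using U(1) that by simp
        show "U i \<noteq> {}" if "i < k" for i using U(2) that by (auto simp: PiE_iff)
      qed
      then obtain y where y: "y \<in> A" "\<forall>i<k. y i \<in> U i" by blast
      have "y \<in> extensional {..<k}" using y(1) sub by (auto simp: PiE_def)
      then have "y \<in> PiE {..<k} U" using y(2) unfolding PiE_def Pi_def by simp
      then show "\<exists>y. y \<in> A \<and> y \<in> T" using y(1) U(3) by blast
    qed
  qed
qed

lemma scrambled_imp_4:
  fixes f :: "'a::metric_space \<Rightarrow> 'a"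
  assumes S: "closure S = UNIV" and scr: "unif_LY_scrambled f S"
    and ni: "\<And>x::'a. x islimpt UNIV" and k: "k \<ge> 2"
  shows "dense_in_power k (Prox k f) \<and> dense_in_power k (Dk k f)"
proof -
  obtain p q where pq: "\<forall>x\<in>S. \<forall>y\<in>S. x \<noteq> y \<longrightarrow>
          ((\<lambda>n. dist ((f ^^ p n) x) ((f ^^ p n) y)) \<longlonglongrightarrow> 0) \<and>
          filterlim (\<lambda>n. dist ((f ^^ q n) x) ((f ^^ q n) y)) at_top sequentially"
    using scr unfolding unif_LY_scrambled_def by blast
  have key: "\<exists>y. y \<in> Prox k f \<and> y \<in> Dk k f \<and> (\<forall>i<k. y i \<in> U i)"
    if U: "\<And>i. i < k \<Longrightarrow> open (U i)" "\<And>i. i < k \<Longrightarrow> U i \<noteq> {}" for U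
  proof -
    have inf: "infinite (U i \<inter> S)" if ik: "i < k" for i
    proof -
      obtain x where "x \<in> U i" using U(2)[OF ik] by blast
      then show ?thesis using dense_open_infinite[OF S ni U(1)[OF ik]] by blast
    qed
    obtain y0 where y0: "inj_on y0 {..<k}" "\<forall>i<k. y0 i \<in> U i \<inter> S"
      using choose_distinct[of k "\<lambda>i. U i \<inter> S", OF inf] by blast
    define y where "y = restrict y0 {..<k}"
    have yE: "y \<in> PiE {..<k} (\<lambda>_. UNIV)" unfolding y_def by simp
    have yi: "\<And>i. i < k \<Longrightarrow> y i = y0 i" unfolding y_def by simp
    have yS: "\<And>i. i < k \<Longrightarrow> y i \<in> S" using y0(2) yi by auto
    have yU: "\<forall>i<k. y i \<in> U i" using y0(2) yi by auto
    have ydist: "y i \<noteq> y j" if ij: "i < j" "j < k" for i j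
    proof
      assume "y i = y j"
      then have "y0 i = y0 j" using yi ij by simp
      then have "i = j" using inj_onD[OF y0(1)] ij by simp
      then show False using ij by simp
    qed
    have pqI: "((\<lambda>n. dist ((f ^^ p n) a) ((f ^^ p n) b)) \<longlonglongrightarrow> 0)"
      "filterlim (\<lambda>n. dist ((f ^^ q n) a) ((f ^^ q n) b)) at_top sequentially"
      if "a \<in> S" "b \<in> S" "a \<noteq> b" for a b
      using pq that by blast+
    define g where "g n i j = dist ((f^^n) (y i)) ((f^^n) (y j))" for n i j
    have lim0: "((\<lambda>n. g (p n) i j) \<longlonglongrightarrow> 0)" if "i < j" "j < k" for i j
      unfolding g_def by (rule pqI(1)[OF yS[of i] yS[of j] ydist[OF that]]) (use that in simp)+
    have limI: "filterlim (\<lambda>n. g (q n) i j) at_top sequentially" if "i < j" "j < k" for i j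
      unfolding g_def by (rule pqI(2)[OF yS[of i] yS[of j] ydist[OF that]]) (use that in simp)+
    define h where "h n = Max {g n i j | i j. i < j \<and> j < k}" for n
    have gnn: "g n i j \<ge> 0" for n i j unfolding g_def by simp
    have hnn: "h n \<ge> 0" for n
      using Max_pair_ge[OF k, of "g n"] gnn[of n 0 1] unfolding h_def by linarith
    have hprox: "liminf (\<lambda>n. ereal (h n)) = 0"
    proof (rule liminf_zeroI[OF hnn])
      fix e :: real and N :: nat assume e: "e > 0"
      show "\<exists>n\<ge>N. h n < e"
      proof (rule abstract_freq_zero[OF hnn _ _ e])
        fix m m' :: nat assume mm: "m \<le> m'" and hm: "h m = 0"
        have "\<forall>i j. i < j \<and> j < k \<longrightarrow> g m i j \<le> 0"
          using hm Max_pair_le_iff[OF k, of "g m" 0] unfolding h_def by simp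
        then have eq: "(f^^m) (y i) = (f^^m) (y j)" if "i < j" "j < k" for i j
          using that gnn[of m i j] unfolding g_def by force
        have split: "(f^^m') x = (f^^(m'-m)) ((f^^m) x)" for x
          using mm by (metis funpow_add le_add_diff_inverse2 o_apply)
        have "g m' i j \<le> 0" if "i < j" "j < k" for i j
        proof -
          have "(f^^m') (y i) = (f^^m') (y j)"
            unfolding split[of "y i"] split[of "y j"] eq[OF that] ..
          then show ?thesis unfolding g_def by simp
        qed
        then have "\<forall>i j. i < j \<and> j < k \<longrightarrow> g m' i j \<le> 0" by blast
        then have "h m' \<le> 0" using Max_pair_le_iff[OF k, of "g m'" 0] unfolding h_def by simp
        then show "h m' = 0" using hnn[of m'] by simp
      next
        fix e :: real assume e: "e > 0"
        have "\<forall>ij\<in>pairs k. eventually (\<lambda>n. g (p n) (fst ij) (snd ij) < e) sequentially"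
        proof
          fix ij assume "ij \<in> pairs k"
          then have "fst ij < snd ij" "snd ij < k" unfolding pairs_def by auto
          from lim0[OF this] e show "eventually (\<lambda>n. g (p n) (fst ij) (snd ij) < e) sequentially"
            by (rule order_tendstoD)
        qed
        then have "eventually (\<lambda>n. \<forall>ij\<in>pairs k. g (p n) (fst ij) (snd ij) < e) sequentially"
          by (rule eventually_ball_finite[OF pairs_finite])
        then show "eventually (\<lambda>n. h (p n) < e) sequentially"
        proof (rule eventually_mono)
          fix n assume "\<forall>ij\<in>pairs k. g (p n) (fst ij) (snd ij) < e"
          then have "\<forall>i j. i < j \<and> j < k \<longrightarrow> g (p n) i j < e" unfolding pairs_def by auto
          then show "h (p n) < e" unfolding h_def using Max_pair_less_iff[OF k] by blast
        qed
      qed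
    qed
    define h' where "h' n = Min {g n i j | i j. i < j \<and> j < k}" for n
    have hD: "limsup (\<lambda>n. ereal (h' n)) = \<infinity>"
    proof (rule limsup_inftyI)
      fix B :: real and N :: nat
      show "\<exists>n\<ge>N. h' n > B"
      proof (rule abstract_freq_infty)
        fix B :: real
        have "\<forall>ij\<in>pairs k. eventually (\<lambda>n. g (q n) (fst ij) (snd ij) > B) sequentially"
        proof
          fix ij assume "ij \<in> pairs k"
          then have "fst ij < snd ij" "snd ij < k" unfolding pairs_def by auto
          from limI[OF this] have "eventually (\<lambda>n. B + 1 \<le> g (q n) (fst ij) (snd ij)) sequentially"
            unfolding filterlim_at_top by blast
          then show "eventually (\<lambda>n. g (q n) (fst ij) (snd ij) > B) sequentially"
            by (rule eventually_mono) simp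
        qed
        then have "eventually (\<lambda>n. \<forall>ij\<in>pairs k. g (q n) (fst ij) (snd ij) > B) sequentially"
          by (rule eventually_ball_finite[OF pairs_finite])
        then show "eventually (\<lambda>n. h' (q n) > B) sequentially"
        proof (rule eventually_mono)
          fix n assume "\<forall>ij\<in>pairs k. g (q n) (fst ij) (snd ij) > B"
          then have "\<forall>i j. i < j \<and> j < k \<longrightarrow> g (q n) i j > B" unfolding pairs_def by auto
          then show "h' (q n) > B" unfolding h'_def using Min_pair_gr_iff[OF k] by blast
        qed
      qed
    qed
    have "y \<in> Prox k f" unfolding Prox_def mem_Collect_eq
      using yE hprox[unfolded h_def g_def] by (intro conjI)
    moreover have "y \<in> Dk k f" unfolding Dk_def mem_Collect_eq
      using yE hD[unfolded h'_def g_def] by (intro conjI)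
    ultimately show ?thesis using yU by blast
  qed
  have s1: "Prox k f \<subseteq> PiE {..<k} (\<lambda>_. UNIV)" unfolding Prox_def by auto
  have s2: "Dk k f \<subseteq> PiE {..<k} (\<lambda>_. UNIV)" unfolding Dk_def by auto
  show ?thesis
  proof
    show "dense_in_power k (Prox k f)"
    proof (rule dense_power_I[OF s1])
      fix U :: "nat \<Rightarrow> 'a set"
      assume UA: "\<And>i. i < k \<Longrightarrow> open (U i)" "\<And>i. i < k \<Longrightarrow> U i \<noteq> {}"
      have "\<exists>y. y \<in> Prox k f \<and> y \<in> Dk k f \<and> (\<forall>i<k. y i \<in> U i)"
        by (rule key) (use UA in auto)
      then show "\<exists>y\<in>Prox k f. \<forall>i<k. y i \<in> U i" by blast
    qed
    show "dense_in_power k (Dk k f)"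
    proof (rule dense_power_I[OF s2])
      fix U :: "nat \<Rightarrow> 'a set"
      assume UA: "\<And>i. i < k \<Longrightarrow> open (U i)" "\<And>i. i < k \<Longrightarrow> U i \<noteq> {}"
      have "\<exists>y. y \<in> Prox k f \<and> y \<in> Dk k f \<and> (\<forall>i<k. y i \<in> U i)"
        by (rule key) (use UA in auto)
      then show "\<exists>y\<in>Dk k f. \<forall>i<k. y i \<in> U i" by blast
    qed
  qed
qed

definition dig :: "(nat \<Rightarrow> bool) \<Rightarrow> nat \<Rightarrow> real" where
  "dig a n = (if a n then 2 else 0)"

definition tern :: "(nat \<Rightarrow> bool) \<Rightarrow> real" where
  "tern a = (\<Sum>n. dig a n / 3 ^ Suc n)"

lemma cantor_ternary_set_eq: "cantor_ternary_set = range tern"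
  unfolding cantor_ternary_set_def tern_def dig_def by auto

lemma geo_bound:
  fixes t :: "nat \<Rightarrow> real"
  assumes b: "\<And>n. \<bar>t n\<bar> \<le> c * (1/3)^n"
  shows "summable t" "\<bar>suminf t\<bar> \<le> c * 3/2"
proof -
  have g: "summable (\<lambda>n. c * (1/3::real)^n)" by (intro summable_mult summable_geometric) simp
  show "summable t" by (rule summable_comparison_test'[OF g, of 0]) (use b in simp)
  have sa: "summable (\<lambda>n. \<bar>t n\<bar>)" by (rule summable_comparison_test'[OF g, of 0]) (use b in simp)
  have "\<bar>suminf t\<bar> \<le> (\<Sum>n. \<bar>t n\<bar>)" by (rule summable_rabs[OF sa])
  also have "\<dots> \<le> (\<Sum>n. c * (1/3)^n)" by (rule suminf_le[OF _ sa g]) (use b in simp)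
  also have "\<dots> = c * (\<Sum>n. (1/3::real)^n)"
    by (rule suminf_mult) (intro summable_geometric, simp)
  also have "(\<Sum>n. (1/3::real)^n) = 3/2" by (subst suminf_geometric) simp_all
  finally show "\<bar>suminf t\<bar> \<le> c * 3/2" by simp
qed

lemma pow3_Suc_add: "(3::real) ^ Suc (n + L) = 3 * 3^L * 3^n"
  by (simp add: power_add)

lemma tail_bound:
  fixes t :: "nat \<Rightarrow> real"
  assumes b: "\<And>n. \<bar>t n\<bar> \<le> 2 / 3 ^ Suc n"
  shows "summable t" "\<bar>\<Sum>n. t (n + L)\<bar> \<le> 1 / 3 ^ L"
proof -
  have b': "\<bar>t (n + L)\<bar> \<le> (2 / (3 * 3^L)) * (1/3)^n" for n
  proof -
    have "\<bar>t (n + L)\<bar> \<le> 2 / 3 ^ Suc (n + L)" by (rule b)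
    also have "\<dots> = (2 / (3 * 3^L)) * (1/3)^n"
      unfolding pow3_Suc_add by (simp add: power_one_over)
    finally show ?thesis .
  qed
  have b0: "\<bar>t n\<bar> \<le> (2/3) * (1/3)^n" for n
  proof -
    have "(2::real) / 3 ^ Suc n = (2/3) * (1/3)^n" by (simp add: power_one_over)
    with b[of n] show ?thesis by simp
  qed
  show "summable t" by (rule geo_bound(1)[OF b0])
  have "\<bar>\<Sum>n. t (n + L)\<bar> \<le> (2 / (3 * 3^L)) * 3/2" by (rule geo_bound(2)[OF b'])
  also have "\<dots> = 1 / 3^L" by simp
  finally show "\<bar>\<Sum>n. t (n + L)\<bar> \<le> 1 / 3 ^ L" .
qed

lemma dig_bound: "\<bar>(dig a n - dig b n) / 3 ^ Suc n\<bar> \<le> 2 / 3 ^ Suc n"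
  unfolding dig_def by (auto simp: abs_divide)

lemma dig_bound1: "\<bar>dig a n / 3 ^ Suc n\<bar> \<le> 2 / 3 ^ Suc n"
  unfolding dig_def by (auto simp: abs_divide)

lemma tern_diff: "tern a - tern b = (\<Sum>n. (dig a n - dig b n) / 3 ^ Suc n)"
proof -
  have "summable (\<lambda>n. dig a n / 3 ^ Suc n)" "summable (\<lambda>n. dig b n / 3 ^ Suc n)"
    using tail_bound(1)[OF dig_bound1[of a]] tail_bound(1)[OF dig_bound1[of b]] by blast+
  then show ?thesis unfolding tern_def by (simp add: suminf_diff diff_divide_distrib)
qed

lemma tern_close:
  assumes "\<forall>i<L. a i = b i"
  shows "\<bar>tern a - tern b\<bar> \<le> 1 / 3 ^ L"
proof -
  let ?t = "\<lambda>n. (dig a n - dig b n) / 3 ^ Suc n"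
  have s: "summable ?t" by (rule tail_bound(1)[OF dig_bound])
  have "(\<Sum>i<L. ?t i) = 0" using assms by (auto simp: dig_def)
  then have "tern a - tern b = (\<Sum>n. ?t (n + L))"
    unfolding tern_diff suminf_split_initial_segment[OF s, of L] by simp
  moreover have "\<bar>\<Sum>n. ?t (n + L)\<bar> \<le> 1 / 3 ^ L" by (rule tail_bound(2)[OF dig_bound])
  ultimately show ?thesis by simp
qed

lemma tern_far:
  assumes "a l \<noteq> b l" "\<forall>i<l. a i = b i"
  shows "1 / 3 ^ Suc l \<le> \<bar>tern a - tern b\<bar>"
proof -
  let ?t = "\<lambda>n. (dig a n - dig b n) / 3 ^ Suc n"
  have s: "summable ?t" by (rule tail_bound(1)[OF dig_bound])
  have "(\<Sum>i<l. ?t i) = 0" using assms by (auto simp: dig_def)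
  then have e1: "tern a - tern b = (\<Sum>n. ?t (n + l))"
    unfolding tern_diff suminf_split_initial_segment[OF s, of l] by simp
  have s2: "summable (\<lambda>n. ?t (n + l))" using s by (rule summable_ignore_initial_segment)
  have e2: "(\<Sum>n. ?t (Suc n + l)) = (\<Sum>n. ?t (n + l)) - ?t (0 + l)"
    using suminf_split_head[OF s2] by simp
  have r: "\<bar>\<Sum>n. ?t (n + Suc l)\<bar> \<le> 1 / 3 ^ Suc l"
    by (rule tail_bound(2)[OF dig_bound])
  have "(\<lambda>n. ?t (Suc n + l)) = (\<lambda>n. ?t (n + Suc l))" by simp
  with e2 have e3: "(\<Sum>n. ?t (n + l)) = ?t l + (\<Sum>n. ?t (n + Suc l))" by simp
  have h: "\<bar>?t l\<bar> = 2 / 3 ^ Suc l" using assms(1) by (auto simp: dig_def abs_divide)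
  have "(1::real) / 3 ^ Suc l = 2 / 3 ^ Suc l - 1 / 3 ^ Suc l" by (simp add: field_simps)
  also have "\<dots> \<le> \<bar>?t l + (\<Sum>n. ?t (n + Suc l))\<bar>" using h r by linarith
  finally show ?thesis using e1 e3 by simp
qed

lemma first_diff:
  assumes "a \<noteq> (b :: nat \<Rightarrow> bool)"
  obtains l where "a l \<noteq> b l" "\<forall>i<l. a i = b i"
proof -
  have "\<exists>n. a n \<noteq> b n" using assms by auto
  then have "a (LEAST n. a n \<noteq> b n) \<noteq> b (LEAST n. a n \<noteq> b n)" by (rule LeastI_ex)
  moreover have "\<forall>i<(LEAST n. a n \<noteq> b n). a i = b i" using not_less_Least by blast
  ultimately show ?thesis using that by blast
qed

lemma tern_inj: "inj tern"
proof (rule injI)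
  fix a b assume eq: "tern a = tern b"
  show "a = b"
  proof (rule ccontr)
    assume "a \<noteq> b"
    then obtain l where "a l \<noteq> b l" "\<forall>i<l. a i = b i" by (rule first_diff)
    then have "1 / 3 ^ Suc l \<le> \<bar>tern a - tern b\<bar>" by (rule tern_far)
    moreover have "(0::real) < 1 / 3 ^ Suc l" by simp
    ultimately show False using eq by linarith
  qed
qed

lemma homeomorphic_ranges:
  fixes \<psi> :: "'c \<Rightarrow> 'a::metric_space" and \<phi> :: "'c \<Rightarrow> 'b::metric_space"
  assumes i1: "inj \<psi>" and i2: "inj \<phi>"
    and c1: "\<And>a e. e > 0 \<Longrightarrow> \<exists>d>0. \<forall>b. dist (\<psi> b) (\<psi> a) < d \<longrightarrow> dist (\<phi> b) (\<phi> a) < e"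
    and c2: "\<And>a e. e > 0 \<Longrightarrow> \<exists>d>0. \<forall>b. dist (\<phi> b) (\<phi> a) < d \<longrightarrow> dist (\<psi> b) (\<psi> a) < e"
  shows "range \<psi> homeomorphic range \<phi>"
  unfolding homeomorphic_def
proof (intro exI)
  show "homeomorphism (range \<psi>) (range \<phi>) (\<phi> \<circ> inv \<psi>) (\<psi> \<circ> inv \<phi>)"
  proof (rule homeomorphismI)
    show "continuous_on (range \<psi>) (\<phi> \<circ> inv \<psi>)"
      unfolding continuous_on_iff
    proof (intro ballI allI impI)
      fix x e assume x: "x \<in> range \<psi>" and e: "(e::real) > 0"
      then obtain a where a: "x = \<psi> a" by blast
      obtain d where d: "d > 0" "\<forall>b. dist (\<psi> b) (\<psi> a) < d \<longrightarrow> dist (\<phi> b) (\<phi> a) < e"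
        using c1[OF e] by blast
      show "\<exists>d>0. \<forall>x'\<in>range \<psi>. dist x' x < d \<longrightarrow> dist ((\<phi> \<circ> inv \<psi>) x') ((\<phi> \<circ> inv \<psi>) x) < e"
      proof (intro exI conjI ballI impI)
        show "d > 0" by (rule d(1))
        fix x' assume x': "x' \<in> range \<psi>" "dist x' x < d"
        then obtain b where b: "x' = \<psi> b" by blast
        have "dist (\<phi> b) (\<phi> a) < e" using d(2) x'(2) a b by blast
        then show "dist ((\<phi> \<circ> inv \<psi>) x') ((\<phi> \<circ> inv \<psi>) x) < e"
          using a b by (simp add: inv_f_f[OF i1])
      qed
    qed
    show "continuous_on (range \<phi>) (\<psi> \<circ> inv \<phi>)"
      unfolding continuous_on_iff
    proof (intro ballI allI impI)
      fix x e assume x: "x \<in> range \<phi>" and e: "(e::real) > 0"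
      then obtain a where a: "x = \<phi> a" by blast
      obtain d where d: "d > 0" "\<forall>b. dist (\<phi> b) (\<phi> a) < d \<longrightarrow> dist (\<psi> b) (\<psi> a) < e"
        using c2[OF e] by blast
      show "\<exists>d>0. \<forall>x'\<in>range \<phi>. dist x' x < d \<longrightarrow> dist ((\<psi> \<circ> inv \<phi>) x') ((\<psi> \<circ> inv \<phi>) x) < e"
      proof (intro exI conjI ballI impI)
        show "d > 0" by (rule d(1))
        fix x' assume x': "x' \<in> range \<phi>" "dist x' x < d"
        then obtain b where b: "x' = \<phi> b" by blast
        have "dist (\<psi> b) (\<psi> a) < e" using d(2) x'(2) a b by blast
        then show "dist ((\<psi> \<circ> inv \<phi>) x') ((\<psi> \<circ> inv \<phi>) x) < e"
          using a b by (simp add: inv_f_f[OF i2])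
      qed
    qed
    show "(\<phi> \<circ> inv \<psi>) ` range \<psi> \<subseteq> range \<phi>" by auto
    show "(\<psi> \<circ> inv \<phi>) ` range \<phi> \<subseteq> range \<psi>" by auto
    show "(\<psi> \<circ> inv \<phi>) ((\<phi> \<circ> inv \<psi>) x) = x" if "x \<in> range \<psi>" for x
      using that by (auto simp: inv_f_f[OF i1] inv_f_f[OF i2])
    show "(\<phi> \<circ> inv \<psi>) ((\<psi> \<circ> inv \<phi>) y) = y" if "y \<in> range \<phi>" for y
      using that by (auto simp: inv_f_f[OF i1] inv_f_f[OF i2])
  qed
qed

lemma cantor_from_tree:
  fixes \<phi> :: "(nat \<Rightarrow> bool) \<Rightarrow> 'a::metric_space"
  assumes inj: "inj \<phi>"
    and A: "\<And>e. e > 0 \<Longrightarrow> \<exists>L. \<forall>a b. (\<forall>i<L. a i = b i) \<longrightarrow> dist (\<phi> a) (\<phi> b) < e"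
    and B: "\<And>a L. \<exists>d>0. \<forall>b. dist (\<phi> b) (\<phi> a) < d \<longrightarrow> (\<forall>i<L. a i = b i)"
  shows "cantor_set (range \<phi>)"
proof -
  have "range tern homeomorphic range \<phi>"
  proof (rule homeomorphic_ranges[OF tern_inj inj])
    fix a and e :: real assume e: "e > 0"
    obtain L where L: "\<forall>a b. (\<forall>i<L. a i = b i) \<longrightarrow> dist (\<phi> a) (\<phi> b) < e" using A[OF e] by blast
    show "\<exists>d>0. \<forall>b. dist (tern b) (tern a) < d \<longrightarrow> dist (\<phi> b) (\<phi> a) < e"
    proof (intro exI conjI allI impI)
      show "(0::real) < 1 / 3 ^ L" by simp
      fix b assume db: "dist (tern b) (tern a) < 1 / 3 ^ L"
      have "\<forall>i<L. b i = a i"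
      proof (rule ccontr)
        assume "\<not> (\<forall>i<L. b i = a i)"
        then have "b \<noteq> a" by auto
        then obtain l where l: "b l \<noteq> a l" "\<forall>i<l. b i = a i" by (rule first_diff)
        have "l < L"
        proof (rule ccontr)
          assume "\<not> l < L"
          then have "\<forall>i<L. b i = a i" using l(2) by auto
          then show False using \<open>\<not> (\<forall>i<L. b i = a i)\<close> by blast
        qed
        have "1 / 3 ^ Suc l \<le> \<bar>tern b - tern a\<bar>" by (rule tern_far[OF l])
        moreover have "(1::real) / 3 ^ L \<le> 1 / 3 ^ Suc l"
          using \<open>l < L\<close> by (intro divide_left_mono power_increasing) auto
        ultimately show False using db by (simp add: dist_real_def)
      qed
      then show "dist (\<phi> b) (\<phi> a) < e" by (rule mp[OF spec[OF spec[OF L, of b], of a]])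
    qed
  next
    fix a and e :: real assume e: "e > 0"
    have "\<exists>L. (1/3::real) ^ L < e" by (rule real_arch_pow_inv[OF e]) simp
    then obtain L where L: "(1/3::real) ^ L < e" ..
    obtain d where d: "d > 0" "\<forall>b. dist (\<phi> b) (\<phi> a) < d \<longrightarrow> (\<forall>i<L. a i = b i)" using B[of a L] by blast
    show "\<exists>d>0. \<forall>b. dist (\<phi> b) (\<phi> a) < d \<longrightarrow> dist (tern b) (tern a) < e"
    proof (intro exI conjI allI impI)
      show "d > 0" by (rule d(1))
      fix b assume "dist (\<phi> b) (\<phi> a) < d"
      then have "\<forall>i<L. b i = a i" using d(2) by auto
      then have "\<bar>tern b - tern a\<bar> \<le> 1 / 3 ^ L" by (rule tern_close)
      then show "dist (tern b) (tern a) < e" using L by (simp add: dist_real_def power_one_over)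
    qed
  qed
  then have "range \<phi> homeomorphic range tern" by (subst homeomorphic_sym)
  then show ?thesis unfolding cantor_set_def cantor_ternary_set_eq .
qed

lemma cantor_uncountable:
  assumes "cantor_set (C :: 'a::metric_space set)"
  shows "uncountable C"
proof
  assume c: "countable C"
  obtain h g where h: "homeomorphism C (range tern) h g"
    using assms unfolding cantor_set_def cantor_ternary_set_eq homeomorphic_def by blast
  then have "range tern = h ` C" unfolding homeomorphism_def by simp
  then have "countable (range tern)" using c by simp
  then have "countable (UNIV :: (nat \<Rightarrow> bool) set)" by (rule countable_image_inj_on[OF _ tern_inj])
  then show False using uncountable_bool_fun by simp
qed

lemma dense_power_D:
  fixes A :: "(nat \<Rightarrow> 'a::metric_space) set"
  assumes d: "dense_in_power k A"
    and U: "\<And>i. i < k \<Longrightarrow> open (U i)" "\<And>i. i < k \<Longrightarrow> U i \<noteq> {}"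
  shows "\<exists>y\<in>A. \<forall>i<k. y i \<in> U i"
proof -
  define z where "z = restrict (\<lambda>i. SOME u. u \<in> U i) {..<k}"
  have zU: "z i \<in> U i" if "i < k" for i
  proof -
    have ex: "\<exists>u. u \<in> U i" using U(2)[OF that] by blast
    show ?thesis unfolding z_def using that someI_ex[OF ex] by simp
  qed
  have zT: "z \<in> topspace (product_topology (\<lambda>_. euclidean::'a topology) {..<k})"
    unfolding z_def by simp
  then have zc: "z \<in> product_topology (\<lambda>_. euclidean) {..<k} closure_of A"
    using d unfolding dense_in_power_def by simp
  have zP: "z \<in> PiE {..<k} U" unfolding PiE_def Pi_def using zU by (simp add: z_def)
  have o: "openin (product_topology (\<lambda>_. euclidean::'a topology) {..<k}) (PiE {..<k} U)"
    unfolding openin_PiE[OF finite_lessThan] using U(1) by simp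
  obtain y where y: "y \<in> A" "y \<in> PiE {..<k} U"
    using zc o zP unfolding in_closure_of by blast
  then show ?thesis by (auto simp: PiE_def Pi_def)
qed

lemma prox_step:
  fixes f :: "'a::metric_space \<Rightarrow> 'a"
  assumes dense: "dense_in_power N (Prox N f)" and N: "N \<ge> 2"
    and U: "\<And>i. i < N \<Longrightarrow> open (U i)" "\<And>i. i < N \<Longrightarrow> U i \<noteq> {}" and e: "e > 0"
  shows "\<exists>x p. (\<forall>i<N. x i \<in> U i) \<and> (\<forall>i<N. \<forall>j<N. dist ((f^^p) (x i)) ((f^^p) (x j)) < e)"
proof -
  have "\<exists>y\<in>Prox N f. \<forall>i<N. y i \<in> U i" by (rule dense_power_D[OF dense]) (use U in auto)
  then obtain y where y: "y \<in> Prox N f" "\<forall>i<N. y i \<in> U i" by blast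
  define h where "h n = Max {dist ((f ^^ n) (y i)) ((f ^^ n) (y j)) | i j. i < j \<and> j < N}" for n
  have "liminf (\<lambda>n. ereal (h n)) = 0" using y(1) unfolding Prox_def h_def by simp
  then obtain p where p: "h p < e" using liminf_zeroD e by blast
  have pw: "dist ((f ^^ p) (y i)) ((f ^^ p) (y j)) < e" if "i < j" "j < N" for i j
    using p Max_pair_less_iff[OF N, of "\<lambda>i j. dist ((f ^^ p) (y i)) ((f ^^ p) (y j))" e] that
    unfolding h_def by blast
  have "\<forall>i<N. \<forall>j<N. dist ((f^^p) (y i)) ((f^^p) (y j)) < e"
  proof (intro allI impI)
    fix i j assume ij: "i < N" "j < N"
    consider "i < j" | "i = j" | "j < i" by linarith
    then show "dist ((f^^p) (y i)) ((f^^p) (y j)) < e"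
    proof cases
      case 1 then show ?thesis using pw ij by blast
    next
      case 2 then show ?thesis using e by simp
    next
      case 3 then show ?thesis using pw[of j i] ij by (simp add: dist_commute)
    qed
  qed
  then show ?thesis using y(2) by blast
qed

lemma D_step:
  fixes f :: "'a::metric_space \<Rightarrow> 'a"
  assumes dense: "dense_in_power N (Dk N f)" and N: "N \<ge> 2"
    and U: "\<And>i. i < N \<Longrightarrow> open (U i)" "\<And>i. i < N \<Longrightarrow> U i \<noteq> {}"
  shows "\<exists>x q. (\<forall>i<N. x i \<in> U i) \<and> (\<forall>i<N. \<forall>j<N. i \<noteq> j \<longrightarrow> dist ((f^^q) (x i)) ((f^^q) (x j)) > B)"
proof -
  have "\<exists>y\<in>Dk N f. \<forall>i<N. y i \<in> U i" by (rule dense_power_D[OF dense]) (use U in auto)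
  then obtain y where y: "y \<in> Dk N f" "\<forall>i<N. y i \<in> U i" by blast
  define h where "h n = Min {dist ((f ^^ n) (y i)) ((f ^^ n) (y j)) | i j. i < j \<and> j < N}" for n
  have "limsup (\<lambda>n. ereal (h n)) = \<infinity>" using y(1) unfolding Dk_def h_def by simp
  then obtain q where q: "h q > B" using limsup_inftyD by blast
  have pw: "dist ((f ^^ q) (y i)) ((f ^^ q) (y j)) > B" if "i < j" "j < N" for i j
    using q Min_pair_gr_iff[OF N, of B "\<lambda>i j. dist ((f ^^ q) (y i)) ((f ^^ q) (y j))"] that
    unfolding h_def by blast
  have "\<forall>i<N. \<forall>j<N. i \<noteq> j \<longrightarrow> dist ((f^^q) (y i)) ((f^^q) (y j)) > B"
  proof (intro allI impI)
    fix i j assume ij: "i < N" "j < N" "i \<noteq> j"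
    consider "i < j" | "j < i" using ij(3) by linarith
    then show "dist ((f^^q) (y i)) ((f^^q) (y j)) > B"
    proof cases
      case 1 then show ?thesis using pw ij by blast
    next
      case 2 then show ?thesis using pw[of j i] ij by (simp add: dist_commute)
    qed
  qed
  then show ?thesis using y(2) by blast
qed

lemma stage_step:
  fixes f :: "'a::metric_space \<Rightarrow> 'a"
  assumes H: "dense_in_power N (Prox N f)" "dense_in_power N (Dk N f)" and cont: "continuous_on UNIV f"
    and N: "N \<ge> 2" and U: "\<And>i. i < N \<Longrightarrow> open (U i)" "\<And>i. i < N \<Longrightarrow> U i \<noteq> {}" and e: "e > 0"
  shows "\<exists>x \<rho> p q. \<forall>i<N. \<rho> i > 0 \<and> cball (x i) (\<rho> i) \<subseteq> U i \<and>
     (\<forall>j<N. \<forall>u\<in>cball (x i) (\<rho> i). \<forall>v\<in>cball (x j) (\<rho> j).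
        dist ((f^^p) u) ((f^^p) v) < e \<and> (i \<noteq> j \<longrightarrow> dist ((f^^q) u) ((f^^q) v) > B))"
proof -
  have e3: "e/3 > 0" using e by simp
  have "\<exists>x p. (\<forall>i<N. x i \<in> U i) \<and> (\<forall>i<N. \<forall>j<N. dist ((f^^p) (x i)) ((f^^p) (x j)) < e/3)"
    by (rule prox_step[OF H(1) N _ _ e3]) (use U in auto)
  then obtain x p where xp: "\<forall>i<N. x i \<in> U i" "\<forall>i<N. \<forall>j<N. dist ((f^^p) (x i)) ((f^^p) (x j)) < e/3"
    by blast
  define U' where "U' i = U i \<inter> (f^^p) -` ball ((f^^p) (x i)) (e/3)" for i
  have cp: "continuous_on UNIV (f^^p)" by (rule continuous_on_funpow[OF cont])
  have U'o: "open (U' i)" if "i < N" for i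
    unfolding U'_def by (intro open_Int U(1)[OF that] open_vimage[OF open_ball cp])
  have U'ne: "U' i \<noteq> {}" if "i < N" for i
  proof -
    have "x i \<in> U' i" unfolding U'_def using xp(1) that e3 by simp
    then show ?thesis by blast
  qed
  have "\<exists>y q. (\<forall>i<N. y i \<in> U' i) \<and> (\<forall>i<N. \<forall>j<N. i \<noteq> j \<longrightarrow> dist ((f^^q) (y i)) ((f^^q) (y j)) > B + 2)"
    by (rule D_step[OF H(2) N]) (use U'o U'ne in auto)
  then obtain y q where yq: "\<forall>i<N. y i \<in> U' i"
    "\<forall>i<N. \<forall>j<N. i \<noteq> j \<longrightarrow> dist ((f^^q) (y i)) ((f^^q) (y j)) > B + 2"
    by blast
  define U'' where "U'' i = U' i \<inter> (f^^q) -` ball ((f^^q) (y i)) 1" for i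
  have cq: "continuous_on UNIV (f^^q)" by (rule continuous_on_funpow[OF cont])
  have "\<forall>i. \<exists>r. i < N \<longrightarrow> r > 0 \<and> cball (y i) r \<subseteq> U'' i"
  proof
    fix i show "\<exists>r. i < N \<longrightarrow> r > 0 \<and> cball (y i) r \<subseteq> U'' i"
    proof (cases "i < N")
      case True
      have o: "open (U'' i)"
        unfolding U''_def by (intro open_Int U'o[OF True] open_vimage[OF open_ball cq])
      have "y i \<in> U'' i" unfolding U''_def using yq(1) True by simp
      then obtain r where "r > 0" "cball (y i) r \<subseteq> U'' i" using o open_contains_cball by blast
      then show ?thesis by blast
    qed simp
  qed
  then obtain \<rho> where \<rho>: "\<And>i. i < N \<Longrightarrow> \<rho> i > 0 \<and> cball (y i) (\<rho> i) \<subseteq> U'' i"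
    by (metis choice)
  have mem: "u \<in> U i \<and> dist ((f^^p) (x i)) ((f^^p) u) < e/3 \<and> dist ((f^^q) (y i)) ((f^^q) u) < 1"
    if "i < N" "u \<in> cball (y i) (\<rho> i)" for i u
  proof -
    have "u \<in> U'' i" using \<rho>[OF that(1)] that(2) by blast
    then show ?thesis unfolding U''_def U'_def by simp
  qed
  show ?thesis
  proof (intro exI allI impI conjI ballI)
    fix i assume i: "i < N"
    show "\<rho> i > 0" using \<rho>[OF i] by simp
    show "cball (y i) (\<rho> i) \<subseteq> U i" using mem[OF i] by blast
    fix j u v assume j: "j < N" and u: "u \<in> cball (y i) (\<rho> i)" and v: "v \<in> cball (y j) (\<rho> j)"
    have mu: "dist ((f^^p) (x i)) ((f^^p) u) < e/3" "dist ((f^^q) (y i)) ((f^^q) u) < 1"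
      using mem[OF i u] by auto
    have mv: "dist ((f^^p) (x j)) ((f^^p) v) < e/3" "dist ((f^^q) (y j)) ((f^^q) v) < 1"
      using mem[OF j v] by auto
    have xx: "dist ((f^^p) (x i)) ((f^^p) (x j)) < e/3" using xp(2) i j by blast
    have t1: "dist ((f^^p) u) ((f^^p) v) \<le> dist ((f^^p) u) ((f^^p) (x i)) + dist ((f^^p) (x i)) ((f^^p) v)"
      by (rule dist_triangle)
    have t2: "dist ((f^^p) (x i)) ((f^^p) v) \<le> dist ((f^^p) (x i)) ((f^^p) (x j)) + dist ((f^^p) (x j)) ((f^^p) v)"
      by (rule dist_triangle)
    show "dist ((f^^p) u) ((f^^p) v) < e"
      using t1 t2 mu(1) mv(1) xx by (simp add: dist_commute)
    assume ij: "i \<noteq> j"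
    have yy: "dist ((f^^q) (y i)) ((f^^q) (y j)) > B + 2" using yq(2) i j ij by blast
    have t3: "dist ((f^^q) (y i)) ((f^^q) (y j)) \<le> dist ((f^^q) (y i)) ((f^^q) u) + dist ((f^^q) u) ((f^^q) (y j))"
      by (rule dist_triangle)
    have t4: "dist ((f^^q) u) ((f^^q) (y j)) \<le> dist ((f^^q) u) ((f^^q) v) + dist ((f^^q) v) ((f^^q) (y j))"
      by (rule dist_triangle)
    show "dist ((f^^q) u) ((f^^q) v) > B"
      using t3 t4 mu(2) mv(2) yy by (simp add: dist_commute)
  qed
qed

lemma stage_step_set:
  fixes f :: "'a::metric_space \<Rightarrow> 'a" and I :: "'i set"
  assumes H: "\<And>k. k \<ge> 2 \<Longrightarrow> dense_in_power k (Prox k f) \<and> dense_in_power k (Dk k f)"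
    and cont: "continuous_on UNIV f"
    and fin: "finite I" and two: "a0 \<in> I" "b0 \<in> I" "a0 \<noteq> b0"
    and U: "\<And>i. i \<in> I \<Longrightarrow> open (U i)" "\<And>i. i \<in> I \<Longrightarrow> U i \<noteq> {}" and e: "e > 0"
  shows "\<exists>x \<rho> p q. \<forall>i\<in>I. \<rho> i > 0 \<and> cball (x i) (\<rho> i) \<subseteq> U i \<and>
     (\<forall>j\<in>I. \<forall>u\<in>cball (x i) (\<rho> i). \<forall>v\<in>cball (x j) (\<rho> j).
        dist ((f^^p) u) ((f^^p) v) < e \<and> (i \<noteq> j \<longrightarrow> dist ((f^^q) u) ((f^^q) v) > B))"
proof -
  define N where "N = card I"
  obtain g where g: "bij_betw g {0..<N} I" using ex_bij_betw_nat_finite[OF fin] unfolding N_def by blast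
  have "card {a0, b0} \<le> card I" using two fin by (intro card_mono) auto
  then have N: "N \<ge> 2" using two(3) unfolding N_def by simp
  define h where "h = inv_into {0..<N} g"
  have hb: "bij_betw h I {0..<N}" unfolding h_def by (rule bij_betw_inv_into[OF g])
  have hN: "h i < N" if "i \<in> I" for i using bij_betw_apply[OF hb that] by simp
  have gh: "g (h i) = i" if "i \<in> I" for i unfolding h_def by (rule bij_betw_inv_into_right[OF g that])
  have gI: "g n \<in> I" if "n < N" for n using bij_betw_apply[OF g] that by simp
  have "\<exists>x \<rho> p q. \<forall>i<N. \<rho> i > 0 \<and> cball (x i) (\<rho> i) \<subseteq> U (g i) \<and>
     (\<forall>j<N. \<forall>u\<in>cball (x i) (\<rho> i). \<forall>v\<in>cball (x j) (\<rho> j).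
        dist ((f^^p) u) ((f^^p) v) < e \<and> (i \<noteq> j \<longrightarrow> dist ((f^^q) u) ((f^^q) v) > B))"
    by (rule stage_step[OF conjunct1[OF H[OF N]] conjunct2[OF H[OF N]] cont N _ _ e])
       (use U gI in auto)
  then obtain x \<rho> p q where X: "\<forall>i<N. \<rho> i > 0 \<and> cball (x i) (\<rho> i) \<subseteq> U (g i) \<and>
     (\<forall>j<N. \<forall>u\<in>cball (x i) (\<rho> i). \<forall>v\<in>cball (x j) (\<rho> j).
        dist ((f^^p) u) ((f^^p) v) < e \<and> (i \<noteq> j \<longrightarrow> dist ((f^^q) u) ((f^^q) v) > B))"
    by blast
  show ?thesis
  proof (intro exI ballI conjI impI)
    fix i assume i: "i \<in> I"
    have Xi: "\<rho> (h i) > 0 \<and> cball (x (h i)) (\<rho> (h i)) \<subseteq> U (g (h i)) \<and>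
     (\<forall>j<N. \<forall>u\<in>cball (x (h i)) (\<rho> (h i)). \<forall>v\<in>cball (x j) (\<rho> j).
        dist ((f^^p) u) ((f^^p) v) < e \<and> (h i \<noteq> j \<longrightarrow> dist ((f^^q) u) ((f^^q) v) > B))"
      using X hN[OF i] by blast
    show "(\<rho> \<circ> h) i > 0" using Xi by simp
    show "cball ((x \<circ> h) i) ((\<rho> \<circ> h) i) \<subseteq> U i" using Xi gh[OF i] by simp
    fix j u v assume j: "j \<in> I" and u: "u \<in> cball ((x \<circ> h) i) ((\<rho> \<circ> h) i)"
      and v: "v \<in> cball ((x \<circ> h) j) ((\<rho> \<circ> h) j)"
    have Xij: "dist ((f^^p) u) ((f^^p) v) < e \<and> (h i \<noteq> h j \<longrightarrow> dist ((f^^q) u) ((f^^q) v) > B)"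
      using Xi hN[OF j] u v by simp
    then show "dist ((f^^p) u) ((f^^p) v) < e" by simp
    assume ij: "i \<noteq> j"
    then have "h i \<noteq> h j" using gh[OF i] gh[OF j] by metis
    then show "dist ((f^^q) u) ((f^^q) v) > B" using Xij by simp
  qed
qed

locale constr =
  fixes f :: "'a::{metric_space,complete_space} \<Rightarrow> 'a" and e :: "nat \<Rightarrow> 'a"
  assumes cont: "continuous_on UNIV f"
    and H: "\<And>k. k \<ge> 2 \<Longrightarrow> dense_in_power k (Prox k f) \<and> dense_in_power k (Dk k f)"
begin

definition addr :: "nat \<Rightarrow> (nat \<times> bool list) set" where
  "addr n = {(m,s). m \<le> n \<and> m + length s = n}"

lemma addr_finite: "finite (addr n)"
proof (rule finite_subset[of _ "{..n} \<times> {s. set s \<subseteq> UNIV \<and> length s \<le> n}"])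
  show "addr n \<subseteq> {..n} \<times> {s. set s \<subseteq> UNIV \<and> length s \<le> n}" unfolding addr_def by auto
  show "finite ({..n} \<times> {s::bool list. set s \<subseteq> UNIV \<and> length s \<le> n})"
    by (intro finite_cartesian_product finite_lists_length_le) auto
qed

definition KK :: "(nat \<times> bool list \<Rightarrow> 'a \<times> real) \<Rightarrow> nat \<times> bool list \<Rightarrow> 'a set" where
  "KK st a = cball (fst (st a)) (snd (st a))"

definition rnew :: "nat \<Rightarrow> real" where
  "rnew m = 1 / (real (snd (prod_decode m)) + 1)"

definition cnew :: "nat \<Rightarrow> 'a" where
  "cnew m = e (fst (prod_decode m))"

definition cand :: "nat \<Rightarrow> (nat \<times> bool list \<Rightarrow> 'a \<times> real) \<Rightarrow> nat \<times> bool list \<Rightarrow> 'a set" where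
  "cand n st a = (if fst a = Suc n then ball (cnew (Suc n)) (min (rnew (Suc n)) (1 / 2 ^ (n + 2)))
      else ball (fst (st (fst a, butlast (snd a)))) (min (snd (st (fst a, butlast (snd a)))) (1 / 2 ^ (n + 2))))"

definition valid_step :: "nat \<Rightarrow> (nat \<times> bool list \<Rightarrow> 'a \<times> real) \<Rightarrow> (nat \<times> bool list \<Rightarrow> 'a \<times> real) \<Rightarrow> nat \<Rightarrow> nat \<Rightarrow> bool" where
  "valid_step n st st' p q \<longleftrightarrow>
     (\<forall>a\<in>addr (Suc n). snd (st' a) > 0 \<and> KK st' a \<subseteq> cand n st a) \<and>
     (\<forall>a\<in>addr (Suc n). \<forall>b\<in>addr (Suc n). \<forall>u\<in>KK st' a. \<forall>v\<in>KK st' b.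
        dist ((f^^p) u) ((f^^p) v) < 1 / real (Suc n) \<and>
        (a \<noteq> b \<longrightarrow> dist ((f^^q) u) ((f^^q) v) > real (Suc n)))"

lemma rnew_pos: "rnew m > 0"
  unfolding rnew_def by simp

lemma valid_exists:
  assumes inv: "\<forall>a\<in>addr n. snd (st a) > 0"
  shows "\<exists>st' p q. valid_step n st st' p q"
proof -
  have two: "(Suc n, []) \<in> addr (Suc n)" "(0, replicate (Suc n) True) \<in> addr (Suc n)"
    "(Suc n, []) \<noteq> (0, replicate (Suc n) True)" by (auto simp: addr_def)
  have co: "open (cand n st a)" if "a \<in> addr (Suc n)" for a unfolding cand_def by auto
  have cne: "cand n st a \<noteq> {}" if a: "a \<in> addr (Suc n)" for a
  proof (cases "fst a = Suc n")
    case True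
    have "cnew (Suc n) \<in> cand n st a" unfolding cand_def using True rnew_pos by simp
    then show ?thesis by blast
  next
    case False
    obtain m s where ms: "a = (m, s)" by (cases a)
    have "m \<le> n" "m + length s = Suc n" using a False ms by (auto simp: addr_def)
    then have "(m, butlast s) \<in> addr n" by (auto simp: addr_def)
    then have "snd (st (m, butlast s)) > 0" using inv by blast
    then have "fst (st (m, butlast s)) \<in> cand n st a" unfolding cand_def using False ms by simp
    then show ?thesis by blast
  qed
  have e1: "1 / real (Suc n) > 0" by simp
  have "\<exists>x \<rho> p q. \<forall>i\<in>addr (Suc n). \<rho> i > 0 \<and> cball (x i) (\<rho> i) \<subseteq> cand n st i \<and>
     (\<forall>j\<in>addr (Suc n). \<forall>u\<in>cball (x i) (\<rho> i). \<forall>v\<in>cball (x j) (\<rho> j).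
        dist ((f^^p) u) ((f^^p) v) < 1 / real (Suc n) \<and> (i \<noteq> j \<longrightarrow> dist ((f^^q) u) ((f^^q) v) > real (Suc n)))"
    by (rule stage_step_set[OF H cont addr_finite two _ _ e1]) (use co cne in auto)
  then obtain x \<rho> p q where X: "\<forall>i\<in>addr (Suc n). \<rho> i > 0 \<and> cball (x i) (\<rho> i) \<subseteq> cand n st i \<and>
     (\<forall>j\<in>addr (Suc n). \<forall>u\<in>cball (x i) (\<rho> i). \<forall>v\<in>cball (x j) (\<rho> j).
        dist ((f^^p) u) ((f^^p) v) < 1 / real (Suc n) \<and> (i \<noteq> j \<longrightarrow> dist ((f^^q) u) ((f^^q) v) > real (Suc n)))"
    by blast
  have "valid_step n st (\<lambda>a. (x a, \<rho> a)) p q"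
    unfolding valid_step_def KK_def using X by simp
  then show ?thesis by blast
qed

definition nxt :: "nat \<Rightarrow> (nat \<times> bool list \<Rightarrow> 'a \<times> real) \<Rightarrow> (nat \<times> bool list \<Rightarrow> 'a \<times> real) \<times> nat \<times> nat" where
  "nxt n st = (SOME t. valid_step n st (fst t) (fst (snd t)) (snd (snd t)))"

primrec stg :: "nat \<Rightarrow> (nat \<times> bool list \<Rightarrow> 'a \<times> real) \<times> nat \<times> nat" where
  "stg 0 = ((\<lambda>_. (e 0, 1/4)), 0, 0)"
| "stg (Suc n) = nxt n (fst (stg n))"

definition pp :: "nat \<Rightarrow> nat" where "pp n = fst (snd (stg n))"
definition qq :: "nat \<Rightarrow> nat" where "qq n = snd (snd (stg n))"

lemma nxt_valid:
  assumes "\<forall>a\<in>addr n. snd (st a) > 0"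
  shows "valid_step n st (fst (nxt n st)) (fst (snd (nxt n st))) (snd (snd (nxt n st)))"
proof -
  obtain st' p q where "valid_step n st st' p q" using valid_exists[OF assms] by blast
  then have "\<exists>t. valid_step n st (fst t) (fst (snd t)) (snd (snd t))"
    by (intro exI[of _ "(st', p, q)"]) simp
  then show ?thesis unfolding nxt_def by (rule someI_ex)
qed

lemma stg_inv: "\<forall>a\<in>addr n. snd (fst (stg n) a) > 0"
proof (induction n)
  case 0 then show ?case by simp
next
  case (Suc n)
  from nxt_valid[OF Suc] show ?case unfolding valid_step_def by simp
qed

lemma stg_valid: "valid_step n (fst (stg n)) (fst (stg (Suc n))) (pp (Suc n)) (qq (Suc n))"
  using nxt_valid[OF stg_inv[of n]] unfolding pp_def qq_def by simp

definition stage :: "nat \<times> bool list \<Rightarrow> nat" where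
  "stage a = fst a + length (snd a)"

definition Kg :: "nat \<times> bool list \<Rightarrow> 'a set" where
  "Kg a = KK (fst (stg (stage a))) a"

lemma addr_stage: "a \<in> addr (stage a)"
  unfolding addr_def stage_def by (cases a) auto

lemma stage_addr: "a \<in> addr n \<Longrightarrow> stage a = n"
  unfolding addr_def stage_def by (cases a) auto

lemma Kg_rad_pos: "snd (fst (stg (stage a)) a) > 0"
  using stg_inv addr_stage by blast

lemma Kg_closed: "closed (Kg a)"
  unfolding Kg_def KK_def by simp

lemma Kg_nonempty: "Kg a \<noteq> {}"
  unfolding Kg_def KK_def using Kg_rad_pos[of a] by auto

lemma cand_sub_ball: "\<exists>c. cand n st a \<subseteq> ball c (1 / 2 ^ (n + 2))"
  unfolding cand_def by (cases "fst a = Suc n") (auto intro!: exI)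

lemma Kg_diam: "u \<in> Kg a \<Longrightarrow> v \<in> Kg a \<Longrightarrow> dist u v \<le> 1 / 2 ^ stage a"
proof (cases "stage a")
  case 0
  assume uv: "u \<in> Kg a" "v \<in> Kg a"
  have "Kg a = cball (e 0) (1/4)" unfolding Kg_def KK_def using 0 by simp
  then have "dist (e 0) u \<le> 1/4" "dist (e 0) v \<le> 1/4" using uv by auto
  then have "dist u v \<le> 1/2" using dist_triangle[of u v "e 0"] by (simp add: dist_commute)
  then show ?thesis using 0 by simp
next
  case (Suc n)
  assume uv: "u \<in> Kg a" "v \<in> Kg a"
  have "a \<in> addr (Suc n)" using addr_stage[of a] Suc by simp
  then have "Kg a \<subseteq> cand n (fst (stg n)) a"
    using stg_valid[of n] Suc unfolding valid_step_def Kg_def by simp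
  moreover obtain c where "cand n (fst (stg n)) a \<subseteq> ball c (1 / 2 ^ (n + 2))"
    using cand_sub_ball by blast
  ultimately have "dist c u < 1 / 2 ^ (n + 2)" "dist c v < 1 / 2 ^ (n + 2)" using uv by auto
  then have "dist u v < 2 * (1 / 2 ^ (n + 2))" using dist_triangle[of u v c] by (simp add: dist_commute)
  also have "2 * (1 / 2 ^ (n + 2)) = (1::real) / 2 ^ Suc n" by simp
  finally show ?thesis using Suc by simp
qed

lemma Kg_nest: "Kg (m, s @ [b]) \<subseteq> Kg (m, s)"
proof -
  define n where "n = stage (m, s)"
  have st: "stage (m, s @ [b]) = Suc n" unfolding n_def stage_def by simp
  have "(m, s @ [b]) \<in> addr (Suc n)" using addr_stage[of "(m, s @ [b])"] st by simp
  then have "Kg (m, s @ [b]) \<subseteq> cand n (fst (stg n)) (m, s @ [b])"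
    using stg_valid[of n] st unfolding valid_step_def Kg_def by simp
  also have "m \<noteq> Suc n" using st unfolding stage_def by simp
  then have "cand n (fst (stg n)) (m, s @ [b]) \<subseteq> KK (fst (stg n)) (m, s)"
    unfolding cand_def KK_def by auto
  also have "KK (fst (stg n)) (m, s) = Kg (m, s)" unfolding Kg_def n_def ..
  finally show ?thesis .
qed

lemma prod_decode_0: "prod_decode 0 = (0, 0)"
  by (simp add: prod_decode_def prod_decode_aux.simps)

lemma Kg_new: "Kg (m, []) \<subseteq> ball (cnew m) (rnew m)"
proof (cases m)
  case 0
  have "Kg (m, []) = cball (e 0) (1/4)" unfolding Kg_def KK_def stage_def using 0 by simp
  moreover have "cnew m = e 0" "rnew m = 1" unfolding cnew_def rnew_def using 0 by (simp_all add: prod_decode_0)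
  ultimately show ?thesis by auto
next
  case (Suc n)
  have st: "stage (m, []) = Suc n" unfolding stage_def using Suc by simp
  have "(m, []) \<in> addr (Suc n)" using addr_stage[of "(m, [])"] st by simp
  then have "Kg (m, []) \<subseteq> cand n (fst (stg n)) (m, [])"
    using stg_valid[of n] st unfolding valid_step_def Kg_def by simp
  also have "\<dots> \<subseteq> ball (cnew m) (rnew m)" unfolding cand_def using Suc by auto
  finally show ?thesis .
qed

lemma Kg_scr:
  assumes "a \<in> addr (Suc n)" "b \<in> addr (Suc n)" "u \<in> Kg a" "v \<in> Kg b"
  shows "dist ((f^^pp (Suc n)) u) ((f^^pp (Suc n)) v) < 1 / real (Suc n)"
    "a \<noteq> b \<Longrightarrow> dist ((f^^qq (Suc n)) u) ((f^^qq (Suc n)) v) > real (Suc n)"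
proof -
  have "u \<in> KK (fst (stg (Suc n))) a" "v \<in> KK (fst (stg (Suc n))) b"
    using assms stage_addr unfolding Kg_def by auto
  then show "dist ((f^^pp (Suc n)) u) ((f^^pp (Suc n)) v) < 1 / real (Suc n)"
    "a \<noteq> b \<Longrightarrow> dist ((f^^qq (Suc n)) u) ((f^^qq (Suc n)) v) > real (Suc n)"
    using stg_valid[of n] assms(1,2) unfolding valid_step_def by blast+
qed

end

definition pref :: "(nat \<Rightarrow> bool) \<Rightarrow> nat \<Rightarrow> bool list" where
  "pref \<alpha> L = map \<alpha> [0..<L]"

lemma pref_Suc: "pref \<alpha> (Suc L) = pref \<alpha> L @ [\<alpha> L]"
  by (simp add: pref_def)

lemma length_pref [simp]: "length (pref \<alpha> L) = L"
  by (simp add: pref_def)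

lemma pref_nth: "i < L \<Longrightarrow> pref \<alpha> L ! i = \<alpha> i"
  by (simp add: pref_def)

lemma pref_eq_iff: "pref \<alpha> L = pref \<beta> L \<longleftrightarrow> (\<forall>i<L. \<alpha> i = \<beta> i)"
proof
  assume "pref \<alpha> L = pref \<beta> L"
  then show "\<forall>i<L. \<alpha> i = \<beta> i" using pref_nth by (metis (no_types))
next
  assume "\<forall>i<L. \<alpha> i = \<beta> i"
  then show "pref \<alpha> L = pref \<beta> L" by (intro nth_equalityI) (simp_all add: pref_nth)
qed

lemma half_pow_le: "(1::real) / 2 ^ (m + L) \<le> 1 / 2 ^ L"
  by (rule divide_left_mono) (simp_all add: power_increasing)

lemma exists_half_pow: "(e::real) > 0 \<Longrightarrow> \<exists>L. 1 / 2 ^ L < e"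
proof -
  assume e: "e > 0"
  have "\<exists>L. (1/2::real) ^ L < e" by (rule real_arch_pow_inv[OF e]) simp
  then show ?thesis by (simp add: power_one_over)
qed

context constr
begin

lemma stage_pref: "stage (m, pref \<alpha> L) = m + L"
  unfolding stage_def by simp

lemma Kg_pref_mono: "L \<le> L' \<Longrightarrow> Kg (m, pref \<alpha> L') \<subseteq> Kg (m, pref \<alpha> L)"
  by (rule lift_Suc_antimono_le[of "\<lambda>L. Kg (m, pref \<alpha> L)"]) (simp_all add: pref_Suc Kg_nest)

lemma point_exists: "\<exists>x. \<forall>L. x \<in> Kg (m, pref \<alpha> L)"
proof -
  have c: "closed (Kg (m, pref \<alpha> L))" for L by (rule Kg_closed)
  have ne: "Kg (m, pref \<alpha> L) \<noteq> {}" for L by (rule Kg_nonempty)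
  have mo: "Kg (m, pref \<alpha> L') \<subseteq> Kg (m, pref \<alpha> L)" if "L \<le> L'" for L L' by (rule Kg_pref_mono[OF that])
  have di: "\<exists>L. \<forall>x\<in>Kg (m, pref \<alpha> L). \<forall>y\<in>Kg (m, pref \<alpha> L). dist x y < \<epsilon>" if eps: "\<epsilon> > 0" for \<epsilon> :: real
  proof -
    obtain L where L: "1 / 2 ^ L < \<epsilon>" using exists_half_pow[OF eps] by blast
    show ?thesis
    proof (intro exI ballI)
      fix x y assume "x \<in> Kg (m, pref \<alpha> L)" "y \<in> Kg (m, pref \<alpha> L)"
      from Kg_diam[OF this] have "dist x y \<le> 1 / 2 ^ (m + L)" unfolding stage_pref .
      then show "dist x y < \<epsilon>" using half_pow_le[of m L] L by linarith
    qed
  qed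
  obtain x where "\<And>L. x \<in> Kg (m, pref \<alpha> L)"
    using decreasing_closed_nest[of "\<lambda>L. Kg (m, pref \<alpha> L)", OF c ne mo di] by blast
  then show ?thesis by blast
qed

definition phi :: "nat \<Rightarrow> (nat \<Rightarrow> bool) \<Rightarrow> 'a" where
  "phi m \<alpha> = (SOME x. \<forall>L. x \<in> Kg (m, pref \<alpha> L))"

lemma phi_in: "phi m \<alpha> \<in> Kg (m, pref \<alpha> L)"
  using someI_ex[OF point_exists[of m \<alpha>]] unfolding phi_def by blast

lemma phi_close:
  assumes "\<forall>i<L. \<alpha> i = \<beta> i"
  shows "dist (phi m \<alpha>) (phi m \<beta>) \<le> 1 / 2 ^ (m + L)"
proof -
  have "pref \<alpha> L = pref \<beta> L" by (rule pref_eq_iff[THEN iffD2, OF assms])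
  then have "phi m \<beta> \<in> Kg (m, pref \<alpha> L)" using phi_in[of m \<beta> L] by simp
  from Kg_diam[OF phi_in[of m \<alpha> L] this] show ?thesis unfolding stage_pref .
qed

lemma addr_pref: "m \<le> n \<Longrightarrow> (m, pref \<alpha> (n - m)) \<in> addr n"
  unfolding addr_def by simp

lemma phi_sep:
  assumes "\<not> (\<forall>i<Suc l. \<alpha> i = \<beta> i)"
  shows "dist ((f^^qq (Suc (m + l))) (phi m \<alpha>)) ((f^^qq (Suc (m + l))) (phi m \<beta>)) > real (Suc (m + l))"
proof -
  have a: "(m, pref \<alpha> (Suc l)) \<in> addr (Suc (m + l))" "(m, pref \<beta> (Suc l)) \<in> addr (Suc (m + l))"
    using addr_pref[of m "Suc (m + l)"] by auto
  have "pref \<alpha> (Suc l) \<noteq> pref \<beta> (Suc l)" unfolding pref_eq_iff by (rule assms)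
  then have "(m, pref \<alpha> (Suc l)) \<noteq> (m, pref \<beta> (Suc l))" by simp
  then show ?thesis by (rule Kg_scr(2)[OF a phi_in phi_in])
qed

lemma phi_inj: "inj (phi m)"
proof (rule injI)
  fix \<alpha> \<beta> assume eq: "phi m \<alpha> = phi m \<beta>"
  show "\<alpha> = \<beta>"
  proof (rule ccontr)
    assume "\<alpha> \<noteq> \<beta>"
    then obtain l where l: "\<alpha> l \<noteq> \<beta> l" "\<forall>i<l. \<alpha> i = \<beta> i" by (rule first_diff)
    then have "\<not> (\<forall>i<Suc l. \<alpha> i = \<beta> i)" by auto
    from phi_sep[OF this, of m] eq show False by simp
  qed
qed

lemma cantor_phi: "cantor_set (range (phi m))"
proof (rule cantor_from_tree[OF phi_inj])
  fix \<epsilon> :: real assume "\<epsilon> > 0"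
  then obtain L where L: "1 / 2 ^ L < \<epsilon>" using exists_half_pow by blast
  show "\<exists>L. \<forall>a b. (\<forall>i<L. a i = b i) \<longrightarrow> dist (phi m a) (phi m b) < \<epsilon>"
  proof (intro exI allI impI)
    fix a b assume "\<forall>i<L. a i = (b::nat \<Rightarrow> bool) i"
    then have "dist (phi m a) (phi m b) \<le> 1 / 2 ^ (m + L)" by (rule phi_close)
    then show "dist (phi m a) (phi m b) < \<epsilon>" using half_pow_le[of m L] L by linarith
  qed
next
  fix a :: "nat \<Rightarrow> bool" and L :: nat
  define g where "g = f ^^ qq (Suc (m + L))"
  have cg: "continuous_on UNIV g" unfolding g_def by (rule continuous_on_funpow[OF cont])
  obtain d where d: "d > 0" "\<forall>x'. dist x' (phi m a) < d \<longrightarrow> dist (g x') (g (phi m a)) < 1"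
    using cg unfolding continuous_on_iff by (metis UNIV_I zero_less_one)
  show "\<exists>d>0. \<forall>b. dist (phi m b) (phi m a) < d \<longrightarrow> (\<forall>i<L. a i = b i)"
  proof (intro exI conjI allI impI)
    show "d > 0" by (rule d(1))
    fix b i assume db: "dist (phi m b) (phi m a) < d" and i: "i < L"
    have "\<forall>i<Suc L. a i = b i"
    proof (rule ccontr)
      assume "\<not> (\<forall>i<Suc L. a i = b i)"
      then have "dist (g (phi m a)) (g (phi m b)) > real (Suc (m + L))"
        unfolding g_def by (rule phi_sep)
      moreover have "dist (g (phi m b)) (g (phi m a)) < 1" using d(2) db by blast
      ultimately show False by (simp add: dist_commute)
    qed
    then show "a i = b i" using i by simp
  qed
qed

definition SS :: "'a set" where
  "SS = (\<Union>m. range (phi m))"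

lemma SS_sigma: "sigma_cantor_set SS"
  unfolding sigma_cantor_set_def SS_def by (intro exI[of _ "\<lambda>m. range (phi m)"]) (simp add: cantor_phi)

lemma SS_dense:
  assumes de: "closure (range e) = UNIV"
  shows "closure SS = UNIV"
proof -
  have "x \<in> closure SS" for x
    unfolding closure_approachable
  proof (intro allI impI)
    fix \<epsilon> :: real assume \<epsilon>: "\<epsilon> > 0"
    have "x \<in> closure (range e)" using de by simp
    then obtain y where y: "y \<in> range e" "dist y x < \<epsilon>/2"
      using \<epsilon> unfolding closure_approachable by (meson half_gt_zero)
    then obtain j where j: "y = e j" by blast
    obtain k where k: "k > 0" "inverse (real k) < \<epsilon>/2"
      using ex_inverse_of_nat_less[of "\<epsilon>/2"] \<epsilon> by auto
    define m where "m = prod_encode (j, k)"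
    have pd: "prod_decode m = (j, k)" unfolding m_def by simp
    have "phi m (\<lambda>_. True) \<in> Kg (m, pref (\<lambda>_. True) 0)" by (rule phi_in)
    then have "phi m (\<lambda>_. True) \<in> Kg (m, [])" by (simp add: pref_def)
    then have "phi m (\<lambda>_. True) \<in> ball (cnew m) (rnew m)" using Kg_new by blast
    then have d1: "dist (e j) (phi m (\<lambda>_. True)) < 1 / (real k + 1)"
      unfolding cnew_def rnew_def pd by simp
    have "1 / (real k + 1) \<le> inverse (real k)" using k(1) by (simp add: field_simps)
    then have "dist (phi m (\<lambda>_. True)) x < \<epsilon>"
      using d1 y(2) j dist_triangle[of "phi m (\<lambda>_. True)" x "e j"] k(2)
      by (simp add: dist_commute)
    moreover have "phi m (\<lambda>_. True) \<in> SS" unfolding SS_def by blast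
    ultimately show "\<exists>y\<in>SS. dist y x < \<epsilon>" by blast
  qed
  then show ?thesis by blast
qed

lemma phi_addr: "m \<le> n \<Longrightarrow> phi m \<alpha> \<in> Kg (m, pref \<alpha> (n - m)) \<and> (m, pref \<alpha> (n - m)) \<in> addr n"
  using phi_in[of m \<alpha> "n - m"] addr_pref[of m n \<alpha>] by simp

lemma ev_diff:
  assumes "phi m \<alpha> \<noteq> phi m' \<beta>"
  shows "\<exists>N. \<forall>n\<ge>N. (m, pref \<alpha> (n - m)) \<noteq> (m', pref \<beta> (n - m'))"
proof (cases "m = m'")
  case False then show ?thesis by auto
next
  case True
  then have "\<alpha> \<noteq> \<beta>" using assms by auto
  then obtain l where l: "\<alpha> l \<noteq> \<beta> l" "\<forall>i<l. \<alpha> i = \<beta> i" by (rule first_diff)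
  show ?thesis
  proof (intro exI allI impI)
    fix n assume n: "n \<ge> m + Suc l"
    have "l < n - m" using n by simp
    then have "\<not> (\<forall>i<n - m. \<alpha> i = \<beta> i)" using l(1) by blast
    then have "pref \<alpha> (n - m) \<noteq> pref \<beta> (n - m)" unfolding pref_eq_iff .
    then show "(m, pref \<alpha> (n - m)) \<noteq> (m', pref \<beta> (n - m'))" using True by simp
  qed
qed

lemma loc:
  assumes n: "n \<ge> max m m'"
  shows "dist ((f^^pp (Suc n)) (phi m \<alpha>)) ((f^^pp (Suc n)) (phi m' \<beta>)) < 1 / real (Suc n) \<and>
      ((m, pref \<alpha> (Suc n - m)) \<noteq> (m', pref \<beta> (Suc n - m')) \<longrightarrow>
         dist ((f^^qq (Suc n)) (phi m \<alpha>)) ((f^^qq (Suc n)) (phi m' \<beta>)) > real (Suc n))"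
proof -
  have A: "phi m \<alpha> \<in> Kg (m, pref \<alpha> (Suc n - m)) \<and> (m, pref \<alpha> (Suc n - m)) \<in> addr (Suc n)"
    by (rule phi_addr) (use n in simp)
  have B: "phi m' \<beta> \<in> Kg (m', pref \<beta> (Suc n - m')) \<and> (m', pref \<beta> (Suc n - m')) \<in> addr (Suc n)"
    by (rule phi_addr) (use n in simp)
  show ?thesis using Kg_scr[of _ n _ "phi m \<alpha>" "phi m' \<beta>"] A B by blast
qed

lemma SS_p: "(\<lambda>n. dist ((f ^^ pp n) (phi m \<alpha>)) ((f ^^ pp n) (phi m' \<beta>))) \<longlonglongrightarrow> 0"
  unfolding LIMSEQ_iff
proof (intro allI impI)
  fix r :: real assume r: "r > 0"
  obtain k where k: "k > 0" "inverse (real k) < r" using ex_inverse_of_nat_less[OF r] by auto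
  show "\<exists>no. \<forall>n\<ge>no. norm (dist ((f ^^ pp n) (phi m \<alpha>)) ((f ^^ pp n) (phi m' \<beta>)) - 0) < r"
  proof (intro exI allI impI)
    fix n assume n: "n \<ge> Suc (max (max m m') k)"
    then obtain n' where n': "n = Suc n'" "n' \<ge> max m m'" "n' \<ge> k" by (cases n) auto
    have "dist ((f^^pp (Suc n')) (phi m \<alpha>)) ((f^^pp (Suc n')) (phi m' \<beta>)) < 1 / real (Suc n')"
      using loc[OF n'(2)] by blast
    moreover have "1 / real (Suc n') \<le> inverse (real k)" using n'(3) k(1) by (simp add: field_simps)
    ultimately show "norm (dist ((f ^^ pp n) (phi m \<alpha>)) ((f ^^ pp n) (phi m' \<beta>)) - 0) < r"
      using k(2) n'(1) by simp
  qed
qed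

lemma SS_q:
  assumes xy: "phi m \<alpha> \<noteq> phi m' \<beta>"
  shows "filterlim (\<lambda>n. dist ((f ^^ qq n) (phi m \<alpha>)) ((f ^^ qq n) (phi m' \<beta>))) at_top sequentially"
proof -
  obtain N where N: "\<forall>n\<ge>N. (m, pref \<alpha> (n - m)) \<noteq> (m', pref \<beta> (n - m'))"
    using ev_diff[OF xy] by blast
  show ?thesis
    unfolding filterlim_at_top eventually_sequentially
  proof (intro allI exI impI)
    fix Z :: real and n assume n: "n \<ge> Suc (max (max m m') (max N (nat \<lceil>Z\<rceil>)))"
    then obtain n' where n': "n = Suc n'" "n' \<ge> max m m'" by (cases n) auto
    have "(m, pref \<alpha> (Suc n' - m)) \<noteq> (m', pref \<beta> (Suc n' - m'))" using N n n'(1) by auto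
    then have "dist ((f^^qq (Suc n')) (phi m \<alpha>)) ((f^^qq (Suc n')) (phi m' \<beta>)) > real (Suc n')"
      using loc[OF n'(2)] by blast
    moreover have "Z \<le> real (Suc n')" using n n'(1) by linarith
    ultimately show "Z \<le> dist ((f ^^ qq n) (phi m \<alpha>)) ((f ^^ qq n) (phi m' \<beta>))" using n'(1) by simp
  qed
qed

lemma SS_scr: "unif_LY_scrambled f SS"
  unfolding unif_LY_scrambled_def
proof (intro conjI)
  have "phi 0 (\<lambda>_. True) \<noteq> phi 0 (\<lambda>_. False)"
  proof
    assume "phi 0 (\<lambda>_. True) = phi 0 (\<lambda>_. False)"
    then have "(\<lambda>_::nat. True) = (\<lambda>_. False)" by (rule injD[OF phi_inj])
    then show False by metis
  qed
  moreover have "phi 0 (\<lambda>_. True) \<in> SS" "phi 0 (\<lambda>_. False) \<in> SS" unfolding SS_def by blast+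
  ultimately show "\<exists>x\<in>SS. \<exists>y\<in>SS. x \<noteq> y" by blast
  show "\<exists>p q. \<forall>x\<in>SS. \<forall>y\<in>SS. x \<noteq> y \<longrightarrow>
          ((\<lambda>n. dist ((f ^^ p n) x) ((f ^^ p n) y)) \<longlonglongrightarrow> 0) \<and>
          filterlim (\<lambda>n. dist ((f ^^ q n) x) ((f ^^ q n) y)) at_top sequentially"
  proof (intro exI ballI impI conjI)
    fix x y assume x: "x \<in> SS" and y: "y \<in> SS" and xy: "x \<noteq> y"
    obtain m \<alpha> where xm: "x = phi m \<alpha>" using x unfolding SS_def by blast
    obtain m' \<beta> where ym: "y = phi m' \<beta>" using y unfolding SS_def by blast
    show "(\<lambda>n. dist ((f ^^ pp n) x) ((f ^^ pp n) y)) \<longlonglongrightarrow> 0"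
      unfolding xm ym by (rule SS_p)
    show "filterlim (\<lambda>n. dist ((f ^^ qq n) x) ((f ^^ qq n) y)) at_top sequentially"
      unfolding xm ym by (rule SS_q) (use xy xm ym in simp)
  qed
qed

end

lemma four_imp_three:
  fixes f :: "'a::{metric_space, complete_space} \<Rightarrow> 'a"
  assumes separable: "\<exists>D::'a set. countable D \<and> closure D = UNIV"
    and cont: "continuous_on UNIV f"
    and H: "\<forall>k\<ge>2. dense_in_power k (Prox k f) \<and> dense_in_power k (Dk k f)"
  shows "\<exists>S. closure S = UNIV \<and> sigma_cantor_set S \<and> unif_LY_scrambled f S"
proof -
  obtain D :: "'a set" where D: "countable D" "closure D = UNIV" using separable by blast
  have "D \<noteq> {}" using D(2) by auto
  define e where "e = from_nat_into D"
  have re: "range e = D" unfolding e_def by (rule range_from_nat_into[OF \<open>D \<noteq> {}\<close> D(1)])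
  interpret constr f e
    by unfold_locales (use cont H in auto)
  have "closure SS = UNIV" by (rule SS_dense) (simp add: re D(2))
  then show ?thesis using SS_sigma SS_scr by (intro exI[of _ SS] conjI)
qed

lemma three_imp_two:
  fixes f :: "'a::metric_space \<Rightarrow> 'a"
  assumes "closure S = UNIV" "sigma_cantor_set S" "unif_LY_scrambled f S"
  shows "densely_unif_LY_chaotic f"
proof -
  obtain C :: "nat \<Rightarrow> 'a set" where C: "\<forall>n. cantor_set (C n)" "S = (\<Union>n. C n)" using assms(2) unfolding sigma_cantor_set_def by blast
  have "uncountable (C 0)" using C(1) cantor_uncountable by blast
  moreover have "C 0 \<subseteq> S" using C(2) by blast
  ultimately have "uncountable S" using countable_subset by blast
  then show ?thesis unfolding densely_unif_LY_chaotic_def using assms(1,3) by blast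
qed

theorem theorem2p3:
  fixes f :: "'a::{metric_space, complete_space} \<Rightarrow> 'a"
  assumes separable: "\<exists>D::'a set. countable D \<and> closure D = UNIV"
    and no_isolated: "\<And>x::'a. x islimpt UNIV"
    and cont: "continuous_on UNIV f"
  shows "((\<exists>S. closure S = UNIV \<and> unif_LY_scrambled f S) \<longleftrightarrow> densely_unif_LY_chaotic f)
       \<and> ((\<exists>S. closure S = UNIV \<and> unif_LY_scrambled f S) \<longleftrightarrow>
            (\<exists>S. closure S = UNIV \<and> sigma_cantor_set S \<and> unif_LY_scrambled f S))
       \<and> ((\<exists>S. closure S = UNIV \<and> unif_LY_scrambled f S) \<longleftrightarrow>
            (\<forall>k\<ge>2. dense_in_power k (Prox k f) \<and> dense_in_power k (Dk k f)))"
proof -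
  let ?P1 = "\<exists>S. closure S = UNIV \<and> unif_LY_scrambled f S"
  let ?P3 = "\<exists>S. closure S = UNIV \<and> sigma_cantor_set S \<and> unif_LY_scrambled f S"
  let ?P4 = "\<forall>k\<ge>2. dense_in_power k (Prox k f) \<and> dense_in_power k (Dk k f)"
  have i14: "?P1 \<Longrightarrow> ?P4"
  proof -
    assume ?P1
    then obtain S where S: "closure S = UNIV" "unif_LY_scrambled f S" by blast
    show ?P4 by (intro allI impI scrambled_imp_4[OF S no_isolated])
  qed
  have i43: "?P4 \<Longrightarrow> ?P3" by (rule four_imp_three[OF separable cont])
  have i32: "?P3 \<Longrightarrow> densely_unif_LY_chaotic f"
  proof -
    assume ?P3
    then obtain S where "closure S = UNIV" "sigma_cantor_set S" "unif_LY_scrambled f S" by blast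
    then show ?thesis by (rule three_imp_two)
  qed
  have i21: "densely_unif_LY_chaotic f \<Longrightarrow> ?P1" unfolding densely_unif_LY_chaotic_def by blast
  have i31: "?P3 \<Longrightarrow> ?P1" by blast
  have a: "?P1 \<longleftrightarrow> densely_unif_LY_chaotic f" using i14 i43 i32 i21 by (intro iffI) auto
  have b: "?P1 \<longleftrightarrow> ?P3" using i14 i43 i31 by (intro iffI) auto
  have c: "?P1 \<longleftrightarrow> ?P4" using i14 i43 i31 by (intro iffI) auto
  show ?thesis using a b c by (intro conjI)
qed

end
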